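(* Let $k\ge r\ge 3$ and $p,t\ge0$ be integers, let $N_2\ge 0$, and let $\pi\in\mathbb{C}_{<}(k,r|p,t)$ be a partition with exactly $N_2$ parts marked $2$ in $GG(\pi)$. Then $p+t\ge N_2$.
   Context: A partition $\pi=(\pi_1,\dots,\pi_\ell)$ is a finite non-increasing sequence of positive integers; "$a$ occurs in $\pi$" means $a=\pi_i$ for some $i$. Göllnitz–Gordon marking: $GG(\pi)$ assigns a positive integer (mark) to each part, processing the parts from smallest to largest ($\pi_\ell,\dots,\pi_1$); $\pi_i$ receives the smallest positive integer different from the marks of all parts $\pi_g$ with $g>i$ and $\pi_i-\pi_g\le 2$, where $\pi_i-\pi_g<2$ is required when $\pi_i$ is odd. An "$r$-marked part $a$" is a part equal to $a$ with mark $r$. $N_i(\pi)$ is the number of parts with mark $i$; $\pi^{(i)}_1\ge\dots\ge\pi^{(i)}_{N_i(\pi)}$ are the parts with mark $i$, with $\pi^{(i)}_0=+\infty$, $\pi^{(i)}_{N_i(\pi)+1}=-\infty$. $\mathbb{C}(k,r)$: partitions with (i) no odd part repeated; (ii) $\pi_i\ge\pi_{i+k-1}+2$ for $1\le i\le\ell-k+1$, strict if $\pi_i$ even; (iii) at most $r-1$ parts $\le 2$. Starting types: for $\pi\in\mathbb{C}(k,r)$ with $N_2=N_2(\pi)\ge1$, let $l$ be the largest integer in $\{0,\dots,N_2\}$ such that no odd part of $\pi$ is $\ge\pi^{(2)}_l$; for $l<i\le N_2$, $\pi^{(2)}_i$ has type $s_{-1}$. For $b=1,\dots,l$ in increasing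 order, type and auxiliary $\sigma_b$: for $b=1$: Case 1: 1-marked part $\pi^{(2)}_1-1$ exists and $\pi^{(2)}_1+2$ does not occur: type $s_0$, $\sigma_1=\pi^{(2)}_1-1$; Case 2: 1-marked $\pi^{(2)}_1-2$ exists and $\pi^{(2)}_1+2$ does not occur: type $s_1$, $\sigma_1=\pi^{(2)}_1-2$; Case 3: 1-marked $\pi^{(2)}_1+2$ exists: type $s_2$, $\sigma_1=\pi^{(2)}_1+2$; Case 4: 1-marked $\pi^{(2)}_1$ exists: type $s_3$, $\sigma_1=\pi^{(2)}_1$. For $2\le b\le l$: Case 1: 1-marked $\pi^{(2)}_b-1$ exists and, if a 1-marked $\pi^{(2)}_b+2$ exists, $\sigma_{b-1}=\pi^{(2)}_b+2$: type $s_0$, $\sigma_b=\pi^{(2)}_b-1$; Case 2: same with $\pi^{(2)}_b-2$: type $s_1$, $\sigma_b=\pi^{(2)}_b-2$; Case 3: 1-marked $\pi^{(2)}_b+2$ exists and $\sigma_{b-1}\ne\pi^{(2)}_b+2$: type $s_2$, $\sigma_b=\pi^{(2)}_b+2$; Case 4: 1-marked $\pi^{(2)}_b$ exists: type $s_3$, $\sigma_b=\pi^{(2)}_b$. $\mathbb{C}_{<}(k,r|p,t)$: the set of $\pi\in\mathbb{C}(k,r)$ such that (1) no odd part is $\ge 2t+1$; (2) $\pi^{(2)}_{p+1}<2t+1<\pi^{(2)}_p$ (in particular $p\le N_2(\pi)$); (3) if $\pi^{(2)}_p=2t+2$ then it is of starting type $s_2$ or $s_3$; (4) if $\pi^{(2)}_{p+1}=2t$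 then it is of starting type $s_0$ or $s_1$. *)

theory Defs
  imports Main "HOL-Library.Extended_Real"
begin

(* A partition is a list xs = [pi_1, ..., pi_l] (0-based: pi_i = xs ! (i-1)),
   non-increasing, with positive entries. *)
definition is_partition :: "nat list \<Rightarrow> bool" where
  "is_partition xs \<longleftrightarrow> sorted_wrt (\<ge>) xs \<and> (\<forall>a\<in>set xs. 0 < a)"

(* The parts are processed from the smallest to
   the largest; "done" is the list of already processed (part, mark) pairs. *)
definition gg_new_mark :: "(nat \<times> nat) list \<Rightarrow> nat \<Rightarrow> nat" where
  "gg_new_mark dn a = (LEAST m. 0 < m \<and>
      m \<notin> {mk. \<exists>b. (b, mk) \<in> set dn \<and> int a - int b \<le> 2 \<and>
                         (odd a \<longrightarrow> int a - int b < 2)})"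

definition gg_asc :: "nat list \<Rightarrow> (nat \<times> nat) list" where
  "gg_asc xs = foldl (\<lambda>dn a. dn @ [(a, gg_new_mark dn a)]) [] (rev xs)"

(* GG xs ! j is the mark of the part xs ! j *)
definition GG :: "nat list \<Rightarrow> nat list" where
  "GG xs = rev (map snd (gg_asc xs))"

definition marked_parts :: "nat list \<Rightarrow> nat \<Rightarrow> nat list" where
  "marked_parts xs i = [xs ! j. j \<leftarrow> [0..<length xs], GG xs ! j = i]"

definition Nmark :: "nat list \<Rightarrow> nat \<Rightarrow> nat" where
  "Nmark xs i = length (marked_parts xs i)"

definition mpart :: "nat list \<Rightarrow> nat \<Rightarrow> nat \<Rightarrow> ereal" where
  "mpart xs i b = (if b = 0 then \<infinity>
                   else if b \<le> Nmark xs i then ereal (real (marked_parts xs i ! (b - 1)))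
                   else -\<infinity>)"

definition marked_exists :: "nat list \<Rightarrow> nat \<Rightarrow> nat \<Rightarrow> bool" where
  "marked_exists xs r a \<longleftrightarrow> (\<exists>j<length xs. xs ! j = a \<and> GG xs ! j = r)"

definition Cset :: "nat \<Rightarrow> nat \<Rightarrow> nat list set" where
  "Cset k r = {xs. is_partition xs
     \<and> (\<forall>a. odd a \<longrightarrow> count_list xs a \<le> 1)
     \<and> (\<forall>i. i + k - 1 < length xs \<longrightarrow>
            xs ! i \<ge> xs ! (i + k - 1) + 2 \<and>
            (even (xs ! i) \<longrightarrow> xs ! i > xs ! (i + k - 1) + 2))
     \<and> length (filter (\<lambda>a. a \<le> 2) xs) \<le> r - 1}"

datatype stype = Sm1 | S0 | S1 | S2 | S3

(* starting type and auxiliary sigma_b of pi^(2)_b, for 1 <= b <= l;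
   the first applicable case (in the order Case 1..4) is taken; None if no case applies *)
fun st_aux :: "nat list \<Rightarrow> nat \<Rightarrow> (stype \<times> nat) option" where
  "st_aux xs 0 = None"
| "st_aux xs (Suc b) =
     (let a = marked_parts xs 2 ! b; one = marked_exists xs 1 in
      if b = 0 then
        (if one (a - 1) \<and> a + 2 \<notin> set xs then Some (S0, a - 1)
         else if one (a - 2) \<and> a + 2 \<notin> set xs then Some (S1, a - 2)
         else if one (a + 2) then Some (S2, a + 2)
         else if one a then Some (S3, a)
         else None)
      else
        (let prev = map_option snd (st_aux xs b) in
         if one (a - 1) \<and> (one (a + 2) \<longrightarrow> prev = Some (a + 2)) then Some (S0, a - 1)
         else if one (a - 2) \<and> (one (a + 2) \<longrightarrow> prev = Some (a + 2)) then Some (S1, a - 2)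
         else if one (a + 2) \<and> prev \<noteq> Some (a + 2) then Some (S2, a + 2)
         else if one a then Some (S3, a)
         else None))"

definition lstart :: "nat list \<Rightarrow> nat" where
  "lstart xs = Max {l. l \<le> Nmark xs 2 \<and>
                        (\<forall>a\<in>set xs. odd a \<longrightarrow> ereal (real a) < mpart xs 2 l)}"

definition start_type :: "nat list \<Rightarrow> nat \<Rightarrow> stype option" where
  "start_type xs b =
     (if 1 \<le> b \<and> b \<le> lstart xs then map_option fst (st_aux xs b)
      else if lstart xs < b \<and> b \<le> Nmark xs 2 then Some Sm1
      else None)"

definition Cless :: "nat \<Rightarrow> nat \<Rightarrow> nat \<Rightarrow> nat \<Rightarrow> nat list set" where
  "Cless k r p t = {xs. xs \<in> Cset k r
     \<and> (\<forall>a\<in>set xs. odd a \<longrightarrow> a < 2 * t + 1)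
     \<and> mpart xs 2 (p + 1) < ereal (real (2 * t + 1))
     \<and> ereal (real (2 * t + 1)) < mpart xs 2 p
     \<and> (mpart xs 2 p = ereal (real (2 * t + 2)) \<longrightarrow>
           start_type xs p \<in> {Some S2, Some S3})
     \<and> (mpart xs 2 (p + 1) = ereal (real (2 * t)) \<longrightarrow>
           start_type xs (p + 1) \<in> {Some S0, Some S1})}"

end

theory Submission
  imports Defs
begin

definition ggf :: "(nat \<times> nat) list \<Rightarrow> nat \<Rightarrow> (nat \<times> nat) list" where
  "ggf = (\<lambda>dn a. dn @ [(a, gg_new_mark dn a)])"

lemma foldl_gg_len: "length (foldl ggf [] ys) = length ys"
  by (induction ys rule: rev_induct) (auto simp: ggf_def)

lemma foldl_gg_nth:
  "i < length ys \<Longrightarrow> foldl ggf [] ys ! i = (ys ! i, gg_new_mark (take i (foldl ggf [] ys)) (ys ! i))"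
proof (induction ys arbitrary: i rule: rev_induct)
  case Nil then show ?case by simp
next
  case (snoc y ys)
  have L: "length (foldl ggf [] ys) = length ys" by (rule foldl_gg_len)
  show ?case
  proof (cases "i < length ys")
    case True
    then show ?thesis using snoc L by (simp add: ggf_def nth_append)
  next
    case False
    then have "i = length ys" using snoc by simp
    then show ?thesis using L by (simp add: ggf_def nth_append)
  qed
qed

lemma new_mark_notin:
  assumes "(b, mk) \<in> set dn" "int a - int b \<le> 1"
  shows "gg_new_mark dn a \<noteq> mk"
proof -
  let ?S = "{mk. \<exists>b. (b, mk) \<in> set dn \<and> int a - int b \<le> 2 \<and> (odd a \<longrightarrow> int a - int b < 2)}"
  have fin: "finite ?S"
  proof -
    have "?S \<subseteq> snd ` set dn" by force
    then show ?thesis using finite_subset by blast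
  qed
  obtain m where "m \<notin> ?S" "0 < m"
    using ex_new_if_finite[OF infinite_UNIV_nat, of "insert 0 ?S"] fin by auto
  then have "0 < gg_new_mark dn a \<and> gg_new_mark dn a \<notin> ?S"
    unfolding gg_new_mark_def using LeastI[of "\<lambda>m. 0 < m \<and> m \<notin> ?S" m] by blast
  moreover have "mk \<in> ?S" using assms by auto
  ultimately show ?thesis by auto
qed

lemma foldl_gg_diff:
  assumes "i' < i" "i < length ys" "int (ys ! i) - int (ys ! i') \<le> 1"
  shows "snd (foldl ggf [] ys ! i) \<noteq> snd (foldl ggf [] ys ! i')"
proof -
  have L: "length (foldl ggf [] ys) = length ys" by (rule foldl_gg_len)
  have "(ys ! i', snd (foldl ggf [] ys ! i')) \<in> set (take i (foldl ggf [] ys))"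
  proof -
    have "take i (foldl ggf [] ys) ! i' = foldl ggf [] ys ! i'" using assms by simp
    moreover have "i' < length (take i (foldl ggf [] ys))" using assms L by simp
    ultimately have "foldl ggf [] ys ! i' \<in> set (take i (foldl ggf [] ys))"
      by (metis nth_mem)
    moreover have "foldl ggf [] ys ! i' = (ys ! i', snd (foldl ggf [] ys ! i'))"
      using foldl_gg_nth[of i' ys] assms by simp
    ultimately show ?thesis by simp
  qed
  then show ?thesis using foldl_gg_nth[of i ys] assms new_mark_notin by simp
qed

lemma GG_len: "length (GG xs) = length xs"
  by (simp add: GG_def gg_asc_def foldl_gg_len[unfolded ggf_def])

lemma GG_nth: "j < length xs \<Longrightarrow> GG xs ! j = snd (foldl ggf [] (rev xs) ! (length xs - Suc j))"
  by (simp add: GG_def gg_asc_def ggf_def[symmetric] rev_nth foldl_gg_len)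

lemma GG_gap:
  assumes part: "is_partition xs" and jj: "j < j'" "j' < length xs" and eq: "GG xs ! j = GG xs ! j'"
  shows "xs ! j' + 2 \<le> xs ! j"
proof (rule ccontr)
  assume c: "\<not> ?thesis"
  let ?n = "length xs"
  have "xs ! j' \<le> xs ! j" using part jj unfolding is_partition_def
    by (simp add: sorted_wrt_iff_nth_less)
  then have d: "int (rev xs ! (?n - Suc j)) - int (rev xs ! (?n - Suc j')) \<le> 1"
    using c jj by (simp add: rev_nth)
  have "snd (foldl ggf [] (rev xs) ! (?n - Suc j)) \<noteq> snd (foldl ggf [] (rev xs) ! (?n - Suc j'))"
    by (rule foldl_gg_diff) (use jj d in auto)
  then show False using eq GG_nth jj by simp
qed

lemma sorted_filter_pair:
  "sorted_wrt R l \<Longrightarrow> sorted_wrt (\<lambda>x y. R x y \<and> P x \<and> P y) (filter P l)"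
  by (induction l) auto

lemma concat_if_filter:
  "concat (map (\<lambda>j. if P j then [f j] else []) l) = map f (filter P l)"
  by (induction l) auto

lemma marked_gap:
  assumes "is_partition xs"
  shows "sorted_wrt (\<lambda>a b. b + 2 \<le> a) (marked_parts xs i)"
proof -
  have "marked_parts xs i = map (nth xs) (filter (\<lambda>j. GG xs ! j = i) [0..<length xs])"
    unfolding marked_parts_def by (simp add: concat_if_filter)
  moreover have "sorted_wrt (\<lambda>x y. x < y \<and> GG xs ! x = i \<and> GG xs ! y = i)
      (filter (\<lambda>j. GG xs ! j = i) [0..<length xs])"
    by (rule sorted_filter_pair) simp
  ultimately show ?thesis
    apply (simp add: sorted_wrt_map)
    apply (erule sorted_wrt_mono_rel[rotated])
    using GG_gap[OF assms] by auto
qed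

lemma marked_pos:
  assumes "is_partition xs" "a \<in> set (marked_parts xs i)" shows "0 < a"
  using assms unfolding marked_parts_def is_partition_def by auto

lemma gap_steps:
  assumes "sorted_wrt (\<lambda>a b. b + 2 \<le> a) L" "q + d < length L"
  shows "L ! (q + d) + 2 * d \<le> L ! q"
  using assms(2)
proof (induction d)
  case 0 then show ?case by simp
next
  case (Suc d)
  have "L ! (q + Suc d) + 2 \<le> L ! (q + d)"
    using assms(1) Suc.prems by (simp add: sorted_wrt_iff_nth_less)
  then show ?case using Suc by simp
qed

lemma len_bound:
  assumes "sorted_wrt (\<lambda>a b. b + 2 \<le> a) L" "\<forall>a\<in>set L. 0 < a"
    and "p < length L \<Longrightarrow> L ! p \<le> 2 * t"
  shows "length L \<le> p + t"
proof (cases "p < length L")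
  case False then show ?thesis by simp
next
  case True
  define d where "d = length L - 1 - p"
  have "p + d < length L" using True d_def by simp
  then have "L ! (p + d) + 2 * d \<le> L ! p" using gap_steps[OF assms(1)] by blast
  moreover have "0 < L ! (p + d)" using assms(2) \<open>p + d < length L\<close> by simp
  ultimately have "1 + 2 * d \<le> 2 * t" using assms(3) True by simp
  then show ?thesis using d_def True by simp
qed

theorem proposition2p3:
  fixes k r p t N2 :: nat and xs :: "nat list"
  assumes "3 \<le> r" and "r \<le> k"
    and "xs \<in> Cless k r p t"
    and "Nmark xs 2 = N2"
  shows "N2 \<le> p + t"
proof -
  let ?L = "marked_parts xs 2"
  have part: "is_partition xs" using assms(3) unfolding Cless_def Cset_def by auto
  have m: "mpart xs 2 (p + 1) < ereal (real (2 * t + 1))" using assms(3) unfolding Cless_def by auto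
  have "p < length ?L \<Longrightarrow> ?L ! p \<le> 2 * t"
  proof -
    assume "p < length ?L"
    then have "mpart xs 2 (p + 1) = ereal (real (?L ! p))" unfolding mpart_def Nmark_def by simp
    with m show ?thesis by simp
  qed
  then have "length ?L \<le> p + t"
    using len_bound marked_gap[OF part] marked_pos[OF part] by blast
  then show ?thesis using assms(4) unfolding Nmark_def by simp
qed

end
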